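(* Let $\mathcal{H}$ be a family of simple $r$-uniform hypergraphs and let $G$ be an $r$-uniform multihypergraph in which every edge has the same multiplicity. Then there exists a simple $r$-uniform hypergraph $G'$ with $e(G')=e(G)$ and $\operatorname{ex}(G',\mathcal{H})\leq\operatorname{ex}(G,\mathcal{H})$.
   Context: $e(\cdot)$ counts edges with multiplicity. For an $r$-uniform (multi)hypergraph $G$, $\operatorname{ex}(G,\mathcal{H})$ is the maximum number of edges (with multiplicity) of a sub-multihypergraph of $G$ (sub-multiset of its edges) that contains no member of $\mathcal{H}$ as a subgraph. *)

theory Defs
  imports Main "HOL-Library.Multiset"
begin

definition uniform_hg :: "nat \<Rightarrow> 'a set \<Rightarrow> 'a set set \<Rightarrow> bool" where
  "uniform_hg r V E \<longleftrightarrow> finite V \<and> (\<forall>e\<in>E. e \<subseteq> V \<and> card e = r)"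

definition uniform_mhg :: "nat \<Rightarrow> 'a set \<Rightarrow> 'a set multiset \<Rightarrow> bool" where
  "uniform_mhg r V M \<longleftrightarrow> finite V \<and> (\<forall>e\<in>#M. e \<subseteq> V \<and> card e = r)"

definition contains_copy :: "'c set \<times> 'c set set \<Rightarrow> 'a set \<Rightarrow> 'a set set \<Rightarrow> bool" where
  "contains_copy h V F \<longleftrightarrow>
     (\<exists>f. inj_on f (fst h) \<and> f ` (fst h) \<subseteq> V \<and> (\<forall>e\<in>snd h. f ` e \<in> F))"

definition H_free :: "('c set \<times> 'c set set) set \<Rightarrow> 'a set \<Rightarrow> 'a set set \<Rightarrow> bool" where
  "H_free H V F \<longleftrightarrow> \<not> (\<exists>h\<in>H. contains_copy h V F)"

text \<open>ex(G,H) for a multihypergraph G = (V,M): maximum size (with multiplicity) of an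
  H-free sub-multiset of the edges.  (Sup of an empty set of nats is 0.)\<close>
definition ex_multi :: "'a set \<Rightarrow> 'a set multiset \<Rightarrow> ('c set \<times> 'c set set) set \<Rightarrow> nat" where
  "ex_multi V M H = Sup {size M' | M'. M' \<subseteq># M \<and> H_free H V (set_mset M')}"

definition ex_simple :: "'a set \<Rightarrow> 'a set set \<Rightarrow> ('c set \<times> 'c set set) set \<Rightarrow> nat" where
  "ex_simple V E H = Sup {card E' | E'. E' \<subseteq> E \<and> H_free H V E'}"

end

theory Submission
  imports Defs "HOL-Library.Nat_Bijection"
begin

theorem proposition2p9:
  fixes r :: nat
    and H :: "('c set \<times> 'c set set) set"
    and V :: "'a set" and M :: "'a set multiset"
  assumes "r \<ge> 1"
    and "\<forall>h\<in>H. uniform_hg r (fst h) (snd h)"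
    and "uniform_mhg r V M"
    and "\<forall>e\<in>#M. \<forall>e'\<in>#M. count M e = count M e'"
  shows "\<exists>(V' :: nat set) E'. uniform_hg r V' E' \<and> card E' = size M
           \<and> ex_simple V' E' H \<le> ex_multi V M H"
proof (cases "M = {#}")
  case True
  have "uniform_hg r ({}::nat set) {}" by (simp add: uniform_hg_def)
  moreover have "ex_simple ({}::nat set) {} H \<le> ex_multi V M H"
  proof -
    have "{card E' | E'. E' \<subseteq> ({}::nat set set) \<and> H_free H ({}::nat set) E'} \<subseteq> {0}" by auto
    then have "ex_simple ({}::nat set) {} H = 0"
      unfolding ex_simple_def
      by (metis (no_types, lifting) Sup_nat_empty cSup_singleton subset_singletonD)
    then show ?thesis by simp
  qed
  ultimately show ?thesis using True by force
next
  case False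
  have finV: "finite V" and edges: "\<And>e. e \<in># M \<Longrightarrow> e \<subseteq> V \<and> card e = r"
    using assms(3) by (auto simp: uniform_mhg_def)
  obtain e0 where e0: "e0 \<in># M" using False by (meson multiset_nonemptyE)
  define t where "t = count M e0"
  have cnt: "\<And>e. e \<in># M \<Longrightarrow> count M e = t" using assms(4) e0 t_def by metis
  have tpos: "t > 0" using e0 t_def by simp
  define S where "S = set_mset M"
  have finS: "finite S" unfolding S_def by simp
  have sizeM: "size M = t * card S"
  proof -
    have "size M = sum (count M) (set_mset M)" by (simp add: size_multiset_overloaded_eq)
    also have "\<dots> = sum (\<lambda>_. t) S" unfolding S_def by (rule sum.cong) (auto simp: cnt)
    finally show ?thesis by simp
  qed
  obtain g :: "'a \<Rightarrow> nat" where g: "inj_on g V" using finite_imp_inj_to_nat_seg[OF finV] by blast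
  define P where "P i v = prod_encode (g v, i)" for i :: nat and v
  have Pinj: "inj_on (P i) V" for i
    using g unfolding P_def inj_on_def by (auto simp: prod_encode_eq)
  have Peq: "P i v = P j w \<Longrightarrow> i = j" for i j v w
    unfolding P_def by (auto simp: prod_encode_eq)
  define \<psi> where "\<psi> = (\<lambda>(i,e). P i ` e)"
  define A where "A = Sigma {..<t} (\<lambda>_. S)"
  have finA: "finite A" unfolding A_def using finS by simp
  have neS: "e \<noteq> {}" if "e \<in> S" for e
    using edges[of e] that assms(1) unfolding S_def by auto
  have psi_inj: "inj_on \<psi> A"
  proof (rule inj_onI)
    fix x y assume x: "x \<in> A" and y: "y \<in> A" and eq: "\<psi> x = \<psi> y"
    obtain i e where xe: "x = (i,e)" by (cases x)
    obtain j e' where ye: "y = (j,e')" by (cases y)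
    have eS: "e \<in> S" and e'S: "e' \<in> S" using x y xe ye A_def by auto
    have eq2: "P i ` e = P j ` e'" using eq xe ye \<psi>_def by simp
    obtain v where v: "v \<in> e" using neS[OF eS] by blast
    then have "P i v \<in> P j ` e'" using eq2 by blast
    then have ij: "i = j" using Peq by blast
    have "e \<subseteq> V" "e' \<subseteq> V" using eS e'S edges S_def by auto
    then have "e = e'" using eq2 ij Pinj[of i] by (simp add: inj_on_image_eq_iff)
    then show "x = y" using xe ye ij by simp
  qed
  define E' where "E' = \<psi> ` A"
  define V' where "V' = (\<lambda>(i,v). P i v) ` ({..<t} \<times> V)"
  have cardE': "card E' = size M"
  proof -
    have "card E' = card A" unfolding E'_def using psi_inj by (simp add: card_image)
    also have "\<dots> = t * card S" unfolding A_def using finS by (simp add: card_cartesian_product)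
    finally show ?thesis using sizeM by simp
  qed
  have unif: "uniform_hg r V' E'"
    unfolding uniform_hg_def
  proof (intro conjI ballI)
    show "finite V'" unfolding V'_def using finV by simp
    fix x assume "x \<in> E'"
    then obtain i e where ie: "i < t" "e \<in> S" "x = P i ` e" unfolding E'_def A_def \<psi>_def by auto
    have eV: "e \<subseteq> V" "card e = r" using ie(2) edges S_def by auto
    show "x \<subseteq> V'" using ie eV unfolding V'_def by force
    show "card x = r" using ie eV Pinj[of i] by (simp add: card_image inj_on_subset)
  qed
  define X where "X = ex_multi V M H"
  have bound: "card E'' \<le> X" if E'': "E'' \<subseteq> E'" "H_free H V' E''" for E''
  proof -
    define F where "F i = {e \<in> S. P i ` e \<in> E''}" for i
    have finF: "finite (F i)" for i unfolding F_def using finS by simp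
    have Fb: "t * card (F i) \<le> X" if "i < t" for i
    proof -
      define M' where "M' = filter_mset (\<lambda>e. e \<in> F i) M"
      have sub: "M' \<subseteq># M" unfolding M'_def by simp
      have setM': "set_mset M' = F i" unfolding M'_def F_def S_def by auto
      have free: "H_free H V (F i)"
        unfolding H_free_def
      proof
        assume "\<exists>h\<in>H. contains_copy h V (F i)"
        then obtain h f where h: "h \<in> H" "inj_on f (fst h)" "f ` fst h \<subseteq> V"
          "\<forall>e\<in>snd h. f ` e \<in> F i" unfolding contains_copy_def by blast
        have "contains_copy h V' E''"
          unfolding contains_copy_def
        proof (intro exI conjI ballI)
          show "inj_on (P i \<circ> f) (fst h)" using h(2,3) Pinj[of i]
            by (simp add: comp_inj_on inj_on_subset)
          show "(P i \<circ> f) ` fst h \<subseteq> V'" using h(3) that unfolding V'_def by force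
          fix e assume "e \<in> snd h"
          then have "f ` e \<in> F i" using h(4) by blast
          then show "(P i \<circ> f) ` e \<in> E''" unfolding F_def by (simp add: image_comp)
        qed
        then show False using E''(2) h(1) unfolding H_free_def by blast
      qed
      have sizeM': "size M' = t * card (F i)"
      proof -
        have "size M' = sum (count M') (set_mset M')" by (simp add: size_multiset_overloaded_eq)
        also have "\<dots> = sum (\<lambda>_. t) (F i)" unfolding setM'
          by (rule sum.cong) (auto simp: M'_def F_def S_def cnt)
        finally show ?thesis by simp
      qed
      have "size M' \<in> {size M' | M'. M' \<subseteq># M \<and> H_free H V (set_mset M')}"
        using sub free setM' by auto
      moreover have "bdd_above {size M' | M'. M' \<subseteq># M \<and> H_free H V (set_mset M')}"
        by (rule bdd_aboveI[of _ "size M"]) (auto simp: size_mset_mono)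
      ultimately have "size M' \<le> X" unfolding X_def ex_multi_def by (rule cSup_upper)
      then show ?thesis using sizeM' by simp
    qed
    define B where "B = Sigma {..<t} F"
    have BA: "B \<subseteq> A" unfolding B_def A_def F_def by auto
    have E''B: "E'' = \<psi> ` B"
    proof
      show "E'' \<subseteq> \<psi> ` B"
      proof
        fix x assume "x \<in> E''"
        then have "x \<in> E'" using E''(1) by blast
        then obtain i e where ie: "i < t" "e \<in> S" "x = P i ` e" unfolding E'_def A_def \<psi>_def by auto
        then have "(i,e) \<in> B" using \<open>x \<in> E''\<close> unfolding B_def F_def by auto
        then show "x \<in> \<psi> ` B" using ie \<psi>_def by force
      qed
      show "\<psi> ` B \<subseteq> E''" unfolding B_def F_def \<psi>_def by auto
    qed
    have "card E'' = card B" unfolding E''B using inj_on_subset[OF psi_inj BA] by (simp add: card_image)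
    also have "\<dots> = (\<Sum>i<t. card (F i))" unfolding B_def using finF by (simp add: card_SigmaI)
    finally have cE: "card E'' = (\<Sum>i<t. card (F i))" .
    have "t * card E'' = (\<Sum>i<t. t * card (F i))" unfolding cE by (simp add: sum_distrib_left)
    also have "\<dots> \<le> (\<Sum>i<t. X)" by (rule sum_mono) (use Fb in auto)
    also have "\<dots> = t * X" by simp
    finally show ?thesis using tpos by simp
  qed
  have "ex_simple V' E' H \<le> X"
  proof (cases "{card E'' | E''. E'' \<subseteq> E' \<and> H_free H V' E''} = {}")
    case True then have "ex_simple V' E' H = Sup ({}::nat set)" unfolding ex_simple_def by argo
    then show ?thesis by simp
  next
    case False then show ?thesis unfolding ex_simple_def
      by (rule cSup_least) (use bound in auto)
  qed
  then show ?thesis using unif cardE' X_def by blast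
qed

end
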